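(* Let $G$ be an infinite connected bipartite graph with maximum degree $d$ and Cheeger constant $h$, let $M\ge1$ be an integer, and let $a,b$ be integers with $0\le b-a\le 2M$. Let $G'$ be a finite set of vertices of $G$. Assume $h\ge 4M\log\big(d^4(4M+1)\big)$ and let $f\sim\nu^{a,b}_{G',M}$. Then for all $v_0\in G'$ and all $n\ge1$, $$\mathbb{P}\big(|A(f,v_0)|=n\big)\le\exp\Big(-\frac{hn}{4M}\Big).$$
   Context: The Cheeger constant is $h=\inf\{|\partial S|/|S|: S\subset V,\ 0<|S|<\infty\}$ where $\partial S$ is the set of vertices outside $S$ with a neighbour in $S$. The two partite classes of $G$ are called even and odd. $\nu^{a,b}_{G',M}$ is the uniform probability measure on the set of $M$-Lipschitz functions $f\colon G'\cup\partial G'\to\mathbb{Z}$ (i.e. $|f(u)-f(v)|\le M$ for adjacent $u,v$) such that $f(v)\in\{a,\dots,b\}$ for even $v\in\partial G'$ and $f(v)\in\{b-M,\dots,a+M\}$ for odd $v\in\partial G'$. For such $f$, $B(f)$ is the set of odd vertices $v\in G'\cup\partial G'$ with $f(v)\notin\{b-M,\dots,a+M\}$ together with the even vertices $v\in G'\cup\partial G'$ with $f(v)\notin\{a,\dots,b\}$. $A(f,v)$ is the connected component containing $v$ of the graph on $B(f)$ in which two vertices are joined when their graph distance in $G$ is at most $2$ (empty if $v\notin B(f)$). *)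

theory Defs
  imports "HOL-Probability.Probability"
begin

text \<open>A graph on vertex type 'v (vertex set = UNIV) with adjacency relation E.\<close>

definition simple_graph :: "('v \<Rightarrow> 'v \<Rightarrow> bool) \<Rightarrow> bool" where
  "simple_graph E \<longleftrightarrow> (\<forall>u v. E u v \<longrightarrow> E v u) \<and> (\<forall>v. \<not> E v v)"

definition connected_graph :: "('v \<Rightarrow> 'v \<Rightarrow> bool) \<Rightarrow> bool" where
  "connected_graph E \<longleftrightarrow> (\<forall>u v. E\<^sup>*\<^sup>* u v)"

definition bipartition :: "('v \<Rightarrow> 'v \<Rightarrow> bool) \<Rightarrow> ('v \<Rightarrow> bool) \<Rightarrow> bool" where
  "bipartition E isev \<longleftrightarrow> (\<forall>u v. E u v \<longrightarrow> (isev u \<longleftrightarrow> \<not> isev v))"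

definition max_degree :: "('v \<Rightarrow> 'v \<Rightarrow> bool) \<Rightarrow> nat \<Rightarrow> bool" where
  "max_degree E d \<longleftrightarrow> (\<forall>v. finite {u. E v u} \<and> card {u. E v u} \<le> d)
                       \<and> (\<exists>v. card {u. E v u} = d)"

definition vboundary :: "('v \<Rightarrow> 'v \<Rightarrow> bool) \<Rightarrow> 'v set \<Rightarrow> 'v set" where
  "vboundary E S = {v. v \<notin> S \<and> (\<exists>u\<in>S. E v u)}"

definition cheeger :: "('v \<Rightarrow> 'v \<Rightarrow> bool) \<Rightarrow> real" where
  "cheeger E = Inf {real (card (vboundary E S)) / real (card S) | S. finite S \<and> S \<noteq> {}}"

definition dist_le2 :: "('v \<Rightarrow> 'v \<Rightarrow> bool) \<Rightarrow> 'v \<Rightarrow> 'v \<Rightarrow> bool" where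
  "dist_le2 E u v \<longleftrightarrow> u = v \<or> E u v \<or> (\<exists>w. E u w \<and> E w v)"

definition lip_funs :: "('v \<Rightarrow> 'v \<Rightarrow> bool) \<Rightarrow> ('v \<Rightarrow> bool) \<Rightarrow> 'v set \<Rightarrow> int \<Rightarrow> int \<Rightarrow> int
                        \<Rightarrow> ('v \<Rightarrow> int) set" where
  "lip_funs E isev G' M a b =
     {f. (\<forall>v. v \<notin> G' \<union> vboundary E G' \<longrightarrow> f v = 0)
       \<and> (\<forall>u\<in>G' \<union> vboundary E G'. \<forall>v\<in>G' \<union> vboundary E G'. E u v \<longrightarrow> \<bar>f u - f v\<bar> \<le> M)
       \<and> (\<forall>v\<in>vboundary E G'. isev v \<longrightarrow> f v \<in> {a..b})
       \<and> (\<forall>v\<in>vboundary E G'. \<not> isev v \<longrightarrow> f v \<in> {b-M..a+M})}"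

definition nu :: "('v \<Rightarrow> 'v \<Rightarrow> bool) \<Rightarrow> ('v \<Rightarrow> bool) \<Rightarrow> 'v set \<Rightarrow> int \<Rightarrow> int \<Rightarrow> int
                  \<Rightarrow> ('v \<Rightarrow> int) pmf" where
  "nu E isev G' M a b = pmf_of_set (lip_funs E isev G' M a b)"

definition Bset :: "('v \<Rightarrow> 'v \<Rightarrow> bool) \<Rightarrow> ('v \<Rightarrow> bool) \<Rightarrow> 'v set \<Rightarrow> int \<Rightarrow> int \<Rightarrow> int
                    \<Rightarrow> ('v \<Rightarrow> int) \<Rightarrow> 'v set" where
  "Bset E isev G' M a b f =
     {v \<in> G' \<union> vboundary E G'. (\<not> isev v \<and> f v \<notin> {b-M..a+M}) \<or> (isev v \<and> f v \<notin> {a..b})}"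

definition Acomp :: "('v \<Rightarrow> 'v \<Rightarrow> bool) \<Rightarrow> ('v \<Rightarrow> bool) \<Rightarrow> 'v set \<Rightarrow> int \<Rightarrow> int \<Rightarrow> int
                    \<Rightarrow> ('v \<Rightarrow> int) \<Rightarrow> 'v \<Rightarrow> 'v set" where
  "Acomp E isev G' M a b f v =
     (let B = Bset E isev G' M a b f in
      {u. v \<in> B \<and> (\<lambda>x y. x \<in> B \<and> y \<in> B \<and> dist_le2 E x y)\<^sup>*\<^sup>* v u})"

end

theory Submission
  imports Defs
begin


definition restr :: "'v set \<Rightarrow> ('v \<Rightarrow> int) \<Rightarrow> 'v \<Rightarrow> int" where
  "restr S f v = (if v \<in> S then f v else 0)"

lemma crossing:
  assumes conn: "\<forall>u v. E\<^sup>*\<^sup>* u v" and "x0 \<in> T" "z0 \<notin> T"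
  shows "\<exists>x z. x \<in> T \<and> z \<notin> T \<and> E x z"
proof -
  have "E\<^sup>*\<^sup>* x0 z \<Longrightarrow> z \<notin> T \<Longrightarrow> \<exists>x z. x \<in> T \<and> z \<notin> T \<and> E x z" for z
  proof (induction rule: rtranclp_induct)
    case base then show ?case using assms(2) by blast
  next
    case (step y z)
    then show ?case by (cases "y \<in> T") auto
  qed
  then show ?thesis using conn assms(3) by blast
qed


lemma restr_insert: "x \<notin> S \<Longrightarrow> restr (insert x S) f = (restr S f)(x := f x)"
  by (auto simp: restr_def fun_eq_iff)

lemma count_lemma:
  fixes E :: "'v \<Rightarrow> 'v \<Rightarrow> bool" and F :: "('v \<Rightarrow> int) set" and Z :: "'v \<Rightarrow> int set"
    and M :: int and c :: nat
  assumes conn: "\<forall>u v. E\<^sup>*\<^sup>* u v" and inf: "infinite (UNIV::'v set)" and fin: "finite A"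
    and lip: "\<forall>\<phi>\<in>F. \<forall>x\<in>A. \<forall>y\<in>A. E x y \<longrightarrow> \<bar>\<phi> x - \<phi> y\<bar> \<le> M"
    and anc: "\<forall>\<phi>\<in>F. \<forall>x\<in>A. \<forall>u. u \<notin> A \<longrightarrow> E x u \<longrightarrow> \<phi> x \<in> Z x"
    and Zc: "\<forall>x\<in>A. finite (Z x) \<and> card (Z x) \<le> c" and cM: "2*M+1 \<le> int c"
  shows "finite (restr A ` F) \<and> card (restr A ` F) \<le> c ^ card A"
proof -
  have main: "k \<le> card A \<Longrightarrow> \<exists>S\<subseteq>A. card S = k \<and> finite (restr S ` F) \<and> card (restr S ` F) \<le> c ^ k" for k
  proof (induction k)
    case 0
    have "restr {} ` F \<subseteq> {\<lambda>_. 0}" by (auto simp: restr_def fun_eq_iff)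
    then have "finite (restr {} ` F) \<and> card (restr {} ` F) \<le> 1"
      by (metis card_mono finite.emptyI finite_insert finite_subset is_singletonI is_singleton_altdef)
    then show ?case by (intro exI[of _ "{}"]) auto
  next
    case (Suc k)
    then obtain S where S: "S \<subseteq> A" "card S = k" "finite (restr S ` F)" "card (restr S ` F) \<le> c ^ k"
      using Suc_leD by blast
    have "S \<noteq> A" using S(2) Suc.prems by auto
    then obtain x0 where x0: "x0 \<in> A - S" using S(1) by blast
    have "finite (A - S)" using fin by auto
    then obtain z0 where "z0 \<notin> A - S" using inf ex_new_if_finite by blast
    then obtain x z where xz: "x \<in> A - S" "z \<notin> A - S" "E x z"
      using crossing[OF conn x0] by blast
    define Y where "Y \<sigma> = (if z \<in> S then {\<sigma> z - M .. \<sigma> z + M} else Z x)" for \<sigma> :: "'v \<Rightarrow> int"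
    have Yc: "finite (Y \<sigma>) \<and> card (Y \<sigma>) \<le> c" for \<sigma>
    proof (cases "z \<in> S")
      case True
      then show ?thesis using cM by (simp add: Y_def)
    next
      case False
      then show ?thesis using Zc xz(1) by (simp add: Y_def)
    qed
    let ?S' = "insert x S"
    have sub: "restr ?S' ` F \<subseteq> (\<lambda>(\<sigma>, y). \<sigma>(x := y)) ` (SIGMA \<sigma>:restr S ` F. Y \<sigma>)"
    proof
      fix g assume "g \<in> restr ?S' ` F"
      then obtain \<phi> where \<phi>: "\<phi> \<in> F" "g = restr ?S' \<phi>" by auto
      have g: "g = (restr S \<phi>)(x := \<phi> x)" using \<phi>(2) restr_insert xz(1) by auto
      have "\<phi> x \<in> Y (restr S \<phi>)"
      proof (cases "z \<in> S")
        case True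
        then have "\<bar>\<phi> x - \<phi> z\<bar> \<le> M" using lip \<phi>(1) xz S(1) by blast
        then show ?thesis using True by (auto simp: Y_def restr_def)
      next
        case False
        then have "z \<notin> A" using xz(2) by auto
        then show ?thesis using False anc \<phi>(1) xz by (auto simp: Y_def)
      qed
      then show "g \<in> (\<lambda>(\<sigma>, y). \<sigma>(x := y)) ` (SIGMA \<sigma>:restr S ` F. Y \<sigma>)"
        using g \<phi>(1) by (auto intro!: image_eqI[of _ _ "(restr S \<phi>, \<phi> x)"])
    qed
    have finSig: "finite (SIGMA \<sigma>:restr S ` F. Y \<sigma>)" using S(3) Yc by auto
    have "card (SIGMA \<sigma>:restr S ` F. Y \<sigma>) = (\<Sum>\<sigma>\<in>restr S ` F. card (Y \<sigma>))"
      using S(3) Yc by (simp add: card_SigmaI)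
    also have "\<dots> \<le> card (restr S ` F) * c"
      using sum_bounded_above[of "restr S ` F" "\<lambda>\<sigma>. card (Y \<sigma>)" c] Yc by (simp add: mult.commute)
    also have "\<dots> \<le> c ^ k * c" using S(4) by simp
    finally have cs: "card (SIGMA \<sigma>:restr S ` F. Y \<sigma>) \<le> c ^ Suc k" by (simp add: mult.commute)
    have fin': "finite (restr ?S' ` F)" using sub finSig finite_subset by blast
    have "card (restr ?S' ` F) \<le> card ((\<lambda>(\<sigma>, y). \<sigma>(x := y)) ` (SIGMA \<sigma>:restr S ` F. Y \<sigma>))"
      using sub finSig by (intro card_mono) auto
    also have "\<dots> \<le> card (SIGMA \<sigma>:restr S ` F. Y \<sigma>)" using card_image_le finSig by blast
    finally have "card (restr ?S' ` F) \<le> c ^ Suc k" using cs by linarith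
    moreover have "card ?S' = Suc k" using S(2) xz(1) fin S(1) finite_subset by (metis DiffD2 card_insert_disjoint)
    ultimately show ?case using fin' S(1) xz(1) by (intro exI[of _ ?S']) auto
  qed
  obtain S where "S \<subseteq> A" "card S = card A" "finite (restr S ` F)" "card (restr S ` F) \<le> c ^ card A"
    using main by blast
  moreover have "S = A" using calculation fin by (simp add: card_subset_eq)
  ultimately show ?thesis by simp
qed


locale setting =
  fixes E :: "'v \<Rightarrow> 'v \<Rightarrow> bool" and isev :: "'v \<Rightarrow> bool" and G' :: "'v set"
    and M a b :: int and d :: nat
  assumes inf: "infinite (UNIV::'v set)" and sg: "simple_graph E" and conn: "connected_graph E"
    and bip: "bipartition E isev" and md: "max_degree E d" and M1: "M \<ge> 1"
    and ab1: "0 \<le> b - a" and ab2: "b - a \<le> 2 * M" and finG: "finite G'"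
begin

definition good :: "'v \<Rightarrow> int \<Rightarrow> bool" where
  "good v y \<longleftrightarrow> (if isev v then a \<le> y \<and> y \<le> b else b - M \<le> y \<and> y \<le> a + M)"

definition W :: "'v set" where "W = G' \<union> vboundary E G'"

definition Om :: "('v \<Rightarrow> int) set" where "Om = lip_funs E isev G' M a b"

lemma symE: "E u v \<Longrightarrow> E v u" using sg by (auto simp: simple_graph_def)
lemma irrE: "\<not> E v v" using sg by (auto simp: simple_graph_def)
lemma conn': "\<forall>u v. E\<^sup>*\<^sup>* u v" using conn by (auto simp: connected_graph_def)

lemma good_lip: "E u v \<Longrightarrow> good u x \<Longrightarrow> good v y \<Longrightarrow> \<bar>x - y\<bar> \<le> M"
  using bip by (auto simp: bipartition_def good_def split: if_splits)

lemma nbrs_fin: "finite {u. E v u}" using md by (auto simp: max_degree_def)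
lemma nbrs_card: "card {u. E v u} \<le> d" using md by (auto simp: max_degree_def)

lemma vb_sub: "vboundary E S \<subseteq> (\<Union>v\<in>S. {u. E v u})"
  by (auto simp: vboundary_def intro: symE)

lemma vb_fin: "finite S \<Longrightarrow> finite (vboundary E S)"
  using vb_sub nbrs_fin by (meson finite_UN_I finite_subset)

lemma finW: "finite W" using finG vb_fin by (simp add: W_def)

lemma Om_def2: "f \<in> Om \<longleftrightarrow> (\<forall>v. v \<notin> W \<longrightarrow> f v = 0)
       \<and> (\<forall>u\<in>W. \<forall>v\<in>W. E u v \<longrightarrow> \<bar>f u - f v\<bar> \<le> M)
       \<and> (\<forall>v\<in>vboundary E G'. good v (f v))"
  by (auto simp: Om_def lip_funs_def W_def good_def)

lemma bd_good: "f \<in> Om \<Longrightarrow> v \<in> vboundary E G' \<Longrightarrow> good v (f v)"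
  using Om_def2 by blast

lemma Bset_eq: "Bset E isev G' M a b f = {v\<in>W. \<not> good v (f v)}"
  by (auto simp: Bset_def W_def good_def)

lemma Bset_sub: "f \<in> Om \<Longrightarrow> Bset E isev G' M a b f \<subseteq> G'"
  using bd_good by (auto simp: Bset_eq W_def)

lemma restr_W: "f \<in> Om \<Longrightarrow> restr W f = f"
  using Om_def2 by (auto simp: restr_def fun_eq_iff)

lemma Om_fin: "finite Om"
proof -
  have "finite (restr W ` Om) \<and> card (restr W ` Om) \<le> (nat (4*M)) ^ card W"
  proof (rule count_lemma[OF conn' inf finW, where M=M and Z="\<lambda>_. {a-M..a+2*M}"])
    show "\<forall>\<phi>\<in>Om. \<forall>x\<in>W. \<forall>y\<in>W. E x y \<longrightarrow> \<bar>\<phi> x - \<phi> y\<bar> \<le> M" using Om_def2 by blast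
    show "\<forall>\<phi>\<in>Om. \<forall>x\<in>W. \<forall>u. u \<notin> W \<longrightarrow> E x u \<longrightarrow> \<phi> x \<in> {a - M..a + 2 * M}"
    proof (intro ballI allI impI)
      fix \<phi> x u assume h: "\<phi> \<in> Om" "x \<in> W" "u \<notin> W" "E x u"
      have "x \<notin> G'"
      proof
        assume "x \<in> G'"
        then have "u \<in> vboundary E G'" using h(3,4) symE by (auto simp: vboundary_def W_def)
        then show False using h(3) by (auto simp: W_def)
      qed
      then have "x \<in> vboundary E G'" using h(2) by (auto simp: W_def)
      then have "good x (\<phi> x)" using bd_good h(1) by blast
      then show "\<phi> x \<in> {a - M..a + 2 * M}" using ab1 ab2 M1 by (auto simp: good_def split: if_splits)
    qed
    show "\<forall>x\<in>W. finite {a - M..a + 2 * M} \<and> card {a - M..a + 2 * M} \<le> nat (4 * M)"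
      using M1 by auto
    show "2 * M + 1 \<le> int (nat (4 * M))" using M1 by auto
  qed
  moreover have "Om \<subseteq> restr W ` Om" using restr_W by force
  ultimately show ?thesis using finite_subset by blast
qed

definition f0 :: "'v \<Rightarrow> int" where
  "f0 v = (if v \<in> W then (if isev v then a else a + M) else 0)"

lemma f0_good: "good v (if isev v then a else a + M)"
  using ab1 ab2 M1 by (auto simp: good_def)

lemma Om_ne: "Om \<noteq> {}"
proof -
  have "f0 \<in> Om" unfolding Om_def2
  proof (intro conjI ballI allI impI)
    fix u v assume "u \<in> W" "v \<in> W" "E u v"
    then show "\<bar>f0 u - f0 v\<bar> \<le> M" using good_lip[OF \<open>E u v\<close> f0_good f0_good] by (simp add: f0_def)
  next
    fix v assume "v \<in> vboundary E G'" then show "good v (f0 v)" using f0_good by (simp add: f0_def W_def)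
  qed (auto simp: f0_def)
  then show ?thesis by auto
qed

end


context setting begin

definition kk :: "'v \<Rightarrow> nat" where "kk v = card {y. good v y}"

lemma good_set: "{y. good v y} = (if isev v then {a..b} else {b-M..a+M})"
  by (auto simp: good_def)

lemma good_fin: "finite {y. good v y}" by (simp add: good_set)

lemma kk_bounds: "1 \<le> kk v \<and> kk v \<le> 2*M+1"
  using ab1 ab2 M1 by (auto simp: kk_def good_set)

lemma excl:
  assumes "E u v" "\<not> good v y"
  shows "\<exists>e. good u e \<and> (\<forall>z. good u z \<and> \<bar>z - y\<bar> \<le> M \<longrightarrow> z \<noteq> e)"
proof (cases "isev v")
  case True
  then have u: "\<not> isev u" using assms(1) bip symE by (auto simp: bipartition_def)
  show ?thesis
  proof (cases "y > b")
    case True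
    then show ?thesis using u ab1 ab2 by (intro exI[of _ "b-M"]) (auto simp: good_def)
  next
    case False
    then have "y < a" using assms(2) \<open>isev v\<close> by (auto simp: good_def)
    then show ?thesis using u ab1 ab2 by (intro exI[of _ "a+M"]) (auto simp: good_def)
  qed
next
  case False
  then have u: "isev u" using assms(1) bip symE by (auto simp: bipartition_def)
  show ?thesis
  proof (cases "y > a + M")
    case True
    then show ?thesis using u ab1 ab2 by (intro exI[of _ "a"]) (auto simp: good_def)
  next
    case False
    then have "y < b - M" using assms(2) \<open>\<not> isev v\<close> by (auto simp: good_def)
    then show ?thesis using u ab1 ab2 by (intro exI[of _ "b"]) (auto simp: good_def)
  qed
qed

lemma excl_card:
  assumes "E u v" "\<not> good v y"
  shows "card {z. good u z \<and> \<bar>z - y\<bar> \<le> M} \<le> kk u - 1"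
proof -
  obtain e where e: "good u e" "\<forall>z. good u z \<and> \<bar>z - y\<bar> \<le> M \<longrightarrow> z \<noteq> e"
    using excl[OF assms] by blast
  have "{z. good u z \<and> \<bar>z - y\<bar> \<le> M} \<subseteq> {z. good u z} - {e}" using e by auto
  then have "card {z. good u z \<and> \<bar>z - y\<bar> \<le> M} \<le> card ({z. good u z} - {e})"
    using good_fin by (intro card_mono) auto
  also have "\<dots> = kk u - 1" using e(1) good_fin by (simp add: kk_def)
  finally show ?thesis .
qed

definition badnear :: "'v \<Rightarrow> int set" where
  "badnear x = {y. \<not> good x y \<and> (\<exists>z. (if isev x then b-M \<le> z \<and> z \<le> a+M else a \<le> z \<and> z \<le> b) \<and> \<bar>y - z\<bar> \<le> M)}"

lemma badnear_sub: "badnear x \<subseteq> (if isev x then {b-2*M..a-1} \<union> {b+1..a+2*M} else {a-M..b-M-1} \<union> {a+M+1..b+M})"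
  by (auto simp: badnear_def good_def split: if_splits)

lemma badnear_card: "finite (badnear x) \<and> card (badnear x) \<le> nat (4*M)"
proof -
  let ?R = "(if isev x then {b-2*M..a-1} \<union> {b+1..a+2*M} else {a-M..b-M-1} \<union> {a+M+1..b+M})"
  have "finite ?R" by auto
  moreover have cR: "card ?R \<le> nat (4*M)"
  proof (cases "isev x")
    case True
    have "card ?R \<le> card {b-2*M..a-1} + card {b+1..a+2*M}" by (simp only: True if_True card_Un_le)
    also have "\<dots> \<le> nat (4*M)" using ab1 ab2 M1 by auto
    finally show ?thesis .
  next
    case False
    have "card ?R \<le> card {a-M..b-M-1} + card {a+M+1..b+M}" by (simp only: False if_False card_Un_le)
    also have "\<dots> \<le> nat (4*M)" using ab1 ab2 M1 by auto
    finally show ?thesis .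
  qed
  moreover have "badnear x \<subseteq> ?R" by (rule badnear_sub)
  ultimately have "finite (badnear x)" "card (badnear x) \<le> card ?R"
    using finite_subset card_mono by blast+
  then show ?thesis using cR by simp
qed

definition NN :: "'v set \<Rightarrow> 'v set" where "NN A = A \<union> vboundary E A"

definition XA :: "'v set \<Rightarrow> ('v \<Rightarrow> int) set" where
  "XA A = {\<phi>. (\<forall>v. v \<notin> NN A \<longrightarrow> \<phi> v = 0) \<and> (\<forall>v\<in>A. \<not> good v (\<phi> v))
      \<and> (\<forall>u\<in>vboundary E A. good u (\<phi> u)) \<and> (\<forall>x\<in>NN A. \<forall>y\<in>NN A. E x y \<longrightarrow> \<bar>\<phi> x - \<phi> y\<bar> \<le> M)}"

definition glue :: "'v set \<Rightarrow> ('v \<Rightarrow> int) \<Rightarrow> ('v \<Rightarrow> int) \<Rightarrow> 'v \<Rightarrow> int" where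
  "glue S \<tau> \<phi> v = (if v \<in> S then \<phi> v else \<tau> v)"

lemma vb_nbr: "u \<in> vboundary E A \<Longrightarrow> \<exists>v\<in>A. E u v" by (auto simp: vboundary_def)

lemma Psi_count:
  assumes "finite A"
  shows "finite (restr A ` XA A) \<and> card (restr A ` XA A) \<le> nat (4*M) ^ card A"
proof (rule count_lemma[OF conn' inf assms, where M=M and Z=badnear])
  show "\<forall>\<phi>\<in>XA A. \<forall>x\<in>A. \<forall>y\<in>A. E x y \<longrightarrow> \<bar>\<phi> x - \<phi> y\<bar> \<le> M"
    by (auto simp: XA_def NN_def)
  show "\<forall>\<phi>\<in>XA A. \<forall>x\<in>A. \<forall>u. u \<notin> A \<longrightarrow> E x u \<longrightarrow> \<phi> x \<in> badnear x"
  proof (intro ballI allI impI)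
    fix \<phi> x u assume h: "\<phi> \<in> XA A" "x \<in> A" "u \<notin> A" "E x u"
    have ub: "u \<in> vboundary E A" using h symE by (auto simp: vboundary_def)
    then have gu: "good u (\<phi> u)" using h(1) by (auto simp: XA_def)
    have l: "\<bar>\<phi> x - \<phi> u\<bar> \<le> M" using h ub by (auto simp: XA_def NN_def)
    have par: "isev u \<longleftrightarrow> \<not> isev x" using bip h(4) by (auto simp: bipartition_def)
    have "\<not> good x (\<phi> x)" using h by (auto simp: XA_def)
    then show "\<phi> x \<in> badnear x" unfolding badnear_def using gu l par
      by (auto simp: good_def intro!: exI[of _ "\<phi> u"] split: if_splits)
  qed
  show "\<forall>x\<in>A. finite (badnear x) \<and> card (badnear x) \<le> nat (4 * M)" using badnear_card by blast
  show "2 * M + 1 \<le> int (nat (4 * M))" using M1 by auto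
qed

definition nbA :: "'v set \<Rightarrow> 'v \<Rightarrow> 'v" where "nbA A u = (SOME v. v \<in> A \<and> E u v)"

definition Ch :: "'v set \<Rightarrow> ('v \<Rightarrow> int) \<Rightarrow> ('v \<Rightarrow> int) set" where
  "Ch A \<psi> = PiE_dflt (vboundary E A) 0 (\<lambda>u. {z. good u z \<and> \<bar>z - \<psi> (nbA A u)\<bar> \<le> M})"

lemma XA_card:
  assumes "finite A"
  shows "finite (XA A) \<and> card (XA A) \<le> nat (4*M) ^ card A * (\<Prod>u\<in>vboundary E A. (kk u - 1))"
proof -
  let ?P = "restr A ` XA A"
  let ?Sig = "SIGMA \<psi>:?P. Ch A \<psi>"
  have finB: "finite (vboundary E A)" using vb_fin assms by blast
  have sub: "XA A \<subseteq> (\<lambda>(\<psi>, ch). glue A ch \<psi>) ` ?Sig"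
  proof
    fix \<phi> assume \<phi>: "\<phi> \<in> XA A"
    have "restr (vboundary E A) \<phi> \<in> Ch A (restr A \<phi>)"
      unfolding Ch_def PiE_dflt_def
    proof (rule CollectI, intro allI conjI impI)
      fix u assume u: "u \<in> vboundary E A"
      then have uA: "u \<notin> A" by (auto simp: vboundary_def)
      obtain v where v: "v \<in> A" "E u v" using vb_nbr[OF u] by blast
      have nb: "nbA A u \<in> A \<and> E u (nbA A u)" unfolding nbA_def by (rule someI[of _ v]) (use v in auto)
      have "\<bar>\<phi> u - \<phi> (nbA A u)\<bar> \<le> M" using \<phi> nb u by (auto simp: XA_def NN_def)
      then show "restr (vboundary E A) \<phi> u \<in> {z. good u z \<and> \<bar>z - restr A \<phi> (nbA A u)\<bar> \<le> M}"
        using \<phi> u nb by (auto simp: restr_def XA_def)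
    qed (auto simp: restr_def)
    moreover have "\<phi> = glue A (restr (vboundary E A) \<phi>) (restr A \<phi>)"
      using \<phi> by (auto simp: glue_def restr_def fun_eq_iff XA_def NN_def)
    ultimately show "\<phi> \<in> (\<lambda>(\<psi>, ch). glue A ch \<psi>) ` ?Sig"
      using \<phi> by (auto intro!: image_eqI[of _ _ "(restr A \<phi>, restr (vboundary E A) \<phi>)"])
  qed
  have chc: "finite (Ch A \<psi>) \<and> card (Ch A \<psi>) \<le> (\<Prod>u\<in>vboundary E A. (kk u - 1))" if "\<psi> \<in> ?P" for \<psi>
  proof -
    obtain \<phi> where \<phi>: "\<phi> \<in> XA A" "\<psi> = restr A \<phi>" using \<open>\<psi> \<in> ?P\<close> by auto
    have fs: "finite {z. good u z \<and> \<bar>z - \<psi> (nbA A u)\<bar> \<le> M}" for u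
      using good_fin by (rule rev_finite_subset) auto
    have "finite (Ch A \<psi>)" unfolding Ch_def using finB fs by blast
    moreover have "card (Ch A \<psi>) = (\<Prod>u\<in>vboundary E A. card {z. good u z \<and> \<bar>z - \<psi> (nbA A u)\<bar> \<le> M})"
      unfolding Ch_def using finB fs by (intro card_PiE_dflt) auto
    moreover have "(\<Prod>u\<in>vboundary E A. card {z. good u z \<and> \<bar>z - \<psi> (nbA A u)\<bar> \<le> M}) \<le> (\<Prod>u\<in>vboundary E A. (kk u - 1))"
    proof (rule prod_mono, rule conjI)
      fix u assume u: "u \<in> vboundary E A"
      obtain v where v: "v \<in> A" "E u v" using vb_nbr[OF u] by blast
      have nb: "nbA A u \<in> A \<and> E u (nbA A u)" unfolding nbA_def by (rule someI[of _ v]) (use v in auto)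
      have "\<not> good (nbA A u) (\<psi> (nbA A u))" using \<phi> nb by (auto simp: XA_def restr_def)
      then show "card {z. good u z \<and> \<bar>z - \<psi> (nbA A u)\<bar> \<le> M} \<le> kk u - 1"
        using excl_card nb by blast
    qed auto
    ultimately show ?thesis by simp
  qed
  have Pc: "finite ?P" "card ?P \<le> nat (4*M) ^ card A" using Psi_count[OF assms] by auto
  have finSig: "finite ?Sig" using Pc(1) chc by auto
  have "card (XA A) \<le> card ((\<lambda>(\<psi>, ch). glue A ch \<psi>) ` ?Sig)"
    using sub finSig by (intro card_mono) auto
  also have "\<dots> \<le> card ?Sig" using card_image_le finSig by blast
  also have "\<dots> = (\<Sum>\<psi>\<in>?P. card (Ch A \<psi>))" using Pc(1) chc by (simp add: card_SigmaI)
  also have "\<dots> \<le> card ?P * (\<Prod>u\<in>vboundary E A. (kk u - 1))"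
    using sum_bounded_above[of ?P "\<lambda>\<psi>. card (Ch A \<psi>)" "\<Prod>u\<in>vboundary E A. (kk u - 1)"] chc by (simp add: mult.commute)
  also have "\<dots> \<le> nat (4*M) ^ card A * (\<Prod>u\<in>vboundary E A. (kk u - 1))"
    using Pc(2) by simp
  finally show ?thesis using sub finSig finite_subset by (metis (no_types, lifting) finite_imageI)
qed

end


context setting begin

definition EA :: "'v set \<Rightarrow> ('v \<Rightarrow> int) set" where
  "EA A = {f\<in>Om. (\<forall>v\<in>A. \<not> good v (f v)) \<and> (\<forall>u\<in>W. u \<notin> A \<longrightarrow> (\<exists>v\<in>A. dist_le2 E v u) \<longrightarrow> good u (f u))}"

definition GoodN :: "'v set \<Rightarrow> ('v \<Rightarrow> int) set" where
  "GoodN A = PiE_dflt (NN A) 0 (\<lambda>v. {y. good v y})"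

definition rOut :: "'v set \<Rightarrow> ('v \<Rightarrow> int) \<Rightarrow> 'v \<Rightarrow> int" where
  "rOut S f v = (if v \<in> S then 0 else f v)"

lemma NN_sub: "A \<subseteq> G' \<Longrightarrow> NN A \<subseteq> W"
  by (auto simp: NN_def W_def vboundary_def)

lemma vb_E: "u \<in> vboundary E A \<Longrightarrow> \<exists>v\<in>A. E v u" using symE by (auto simp: vboundary_def)

lemma EA_restr: assumes "A \<subseteq> G'" "f \<in> EA A" shows "restr (NN A) f \<in> XA A"
proof -
  have fO: "f \<in> Om" using assms(2) by (simp add: EA_def)
  have NW: "NN A \<subseteq> W" using NN_sub[OF assms(1)] .
  show ?thesis unfolding XA_def
  proof (rule CollectI, intro conjI allI ballI impI)
    fix v assume "v \<notin> NN A" then show "restr (NN A) f v = 0" by (simp add: restr_def)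
  next
    fix v assume "v \<in> A" then show "\<not> good v (restr (NN A) f v)"
      using assms(2) by (auto simp: EA_def restr_def NN_def)
  next
    fix u assume u: "u \<in> vboundary E A"
    then obtain v where "v \<in> A" "E v u" using vb_E by blast
    then have "dist_le2 E v u" by (simp add: dist_le2_def)
    moreover have "u \<in> W" "u \<notin> A" using u NW by (auto simp: NN_def vboundary_def)
    ultimately have "good u (f u)" using assms(2) \<open>v \<in> A\<close> by (auto simp: EA_def)
    then show "good u (restr (NN A) f u)" using u by (simp add: restr_def NN_def)
  next
    fix x y assume xy: "x \<in> NN A" "y \<in> NN A" "E x y"
    then have "x \<in> W" "y \<in> W" using NW by auto
    then have "\<bar>f x - f y\<bar> \<le> M" using fO xy(3) unfolding Om_def2 by blast
    then show "\<bar>restr (NN A) f x - restr (NN A) f y\<bar> \<le> M"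
      using xy by (simp add: restr_def)
  qed
qed

lemma glue_Om:
  assumes A: "A \<subseteq> G'" and f: "f \<in> EA A" and \<phi>: "\<phi> \<in> GoodN A"
  shows "glue (NN A) (rOut (NN A) f) \<phi> \<in> Om"
proof -
  let ?g = "glue (NN A) (rOut (NN A) f) \<phi>"
  have fO: "f \<in> Om" using f by (simp add: EA_def)
  have NW: "NN A \<subseteq> W" using NN_sub[OF A] .
  have gN: "v \<in> NN A \<Longrightarrow> ?g v = \<phi> v \<and> good v (\<phi> v)" for v
    using \<phi> by (auto simp: glue_def GoodN_def PiE_dflt_def)
  have gO: "v \<notin> NN A \<Longrightarrow> ?g v = f v" for v by (simp add: glue_def rOut_def)
  have far: "good v (f v)" if "v \<in> W" "v \<notin> NN A" "u \<in> NN A" "E u v" for u v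
  proof -
    have "u \<notin> A" using that by (auto simp: NN_def vboundary_def intro: symE)
    then have "u \<in> vboundary E A" using that(3) by (simp add: NN_def)
    then obtain w where "w \<in> A" "E w u" using vb_E by blast
    then have "dist_le2 E w v" using that(4) by (auto simp: dist_le2_def)
    moreover have "v \<notin> A" using that(2) by (simp add: NN_def)
    ultimately show ?thesis using f that(1) \<open>w \<in> A\<close> by (auto simp: EA_def)
  qed
  show ?thesis unfolding Om_def2
  proof (intro conjI allI impI ballI)
    fix v assume v: "v \<notin> W"
    then have "v \<notin> NN A" using NW by blast
    moreover have "f v = 0" using fO v unfolding Om_def2 by blast
    ultimately show "?g v = 0" using gO by simp
  next
    fix u v assume uv: "u \<in> W" "v \<in> W" "E u v"
    show "\<bar>?g u - ?g v\<bar> \<le> M"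
    proof (cases "u \<in> NN A")
      case uN: True
      have g1: "?g u = \<phi> u" "good u (\<phi> u)" using gN[OF uN] by auto
      show ?thesis
      proof (cases "v \<in> NN A")
        case True
        have g2: "?g v = \<phi> v" "good v (\<phi> v)" using gN[OF True] by auto
        show ?thesis using good_lip[OF uv(3) g1(2) g2(2)] g1(1) g2(1) by simp
      next
        case False
        have g2: "?g v = f v" "good v (f v)" using gO[OF False] far[OF uv(2) False uN uv(3)] by auto
        show ?thesis using good_lip[OF uv(3) g1(2) g2(2)] g1(1) g2(1) by simp
      qed
    next
      case uN: False
      have g1: "?g u = f u" using gO[OF uN] by auto
      show ?thesis
      proof (cases "v \<in> NN A")
        case True
        have "E v u" using uv(3) symE by blast
        have g2: "?g v = \<phi> v" "good v (\<phi> v)" using gN[OF True] by auto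
        have "good u (f u)" using far[OF uv(1) uN True \<open>E v u\<close>] .
        then have "\<bar>\<phi> v - f u\<bar> \<le> M" using good_lip[OF \<open>E v u\<close> g2(2)] by blast
        then show ?thesis using g1 g2(1) by (simp add: abs_minus_commute)
      next
        case False
        have g2: "?g v = f v" using gO[OF False] by auto
        have "\<bar>f u - f v\<bar> \<le> M" using fO uv unfolding Om_def2 by blast
        then show ?thesis using g1 g2 by simp
      qed
    qed
  next
    fix v assume v: "v \<in> vboundary E G'"
    show "good v (?g v)"
    proof (cases "v \<in> NN A")
      case True then show ?thesis using gN[OF True] by simp
    next
      case False then show ?thesis using gO[OF False] bd_good[OF fO v] by simp
    qed
  qed
qed

lemma EA_card:
  assumes A: "A \<subseteq> G'" and finA: "finite A"
  shows "card (EA A) \<le> card (rOut (NN A) ` EA A) * card (XA A)"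
    and "card (rOut (NN A) ` EA A) * card (GoodN A) \<le> card Om"
proof -
  let ?T = "rOut (NN A) ` EA A"
  have finE: "finite (EA A)" using Om_fin by (rule rev_finite_subset) (auto simp: EA_def)
  have finT: "finite ?T" using finE by simp
  have finX: "finite (XA A)" using XA_card[OF finA] by simp
  have "EA A \<subseteq> (\<lambda>(\<tau>, \<phi>). glue (NN A) \<tau> \<phi>) ` (?T \<times> XA A)"
  proof
    fix f assume f: "f \<in> EA A"
    have "f = glue (NN A) (rOut (NN A) f) (restr (NN A) f)"
      by (auto simp: glue_def rOut_def restr_def fun_eq_iff)
    then show "f \<in> (\<lambda>(\<tau>, \<phi>). glue (NN A) \<tau> \<phi>) ` (?T \<times> XA A)"
      using f EA_restr[OF A f] by (auto intro!: image_eqI[of _ _ "(rOut (NN A) f, restr (NN A) f)"])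
  qed
  then have "card (EA A) \<le> card ((\<lambda>(\<tau>, \<phi>). glue (NN A) \<tau> \<phi>) ` (?T \<times> XA A))"
    using finT finX by (intro card_mono) auto
  also have "\<dots> \<le> card (?T \<times> XA A)" using finT finX by (intro card_image_le) auto
  finally show "card (EA A) \<le> card ?T * card (XA A)" by (simp add: card_cartesian_product)
  have inj: "inj_on (\<lambda>(\<tau>, \<phi>). glue (NN A) \<tau> \<phi>) (?T \<times> GoodN A)"
  proof (rule inj_onI, clarify)
    fix f1 \<phi>1 f2 \<phi>2
    assume h: "f1 \<in> EA A" "\<phi>1 \<in> GoodN A" "f2 \<in> EA A" "\<phi>2 \<in> GoodN A"
      and eq: "glue (NN A) (rOut (NN A) f1) \<phi>1 = glue (NN A) (rOut (NN A) f2) \<phi>2"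
    show "rOut (NN A) f1 = rOut (NN A) f2 \<and> \<phi>1 = \<phi>2"
    proof
      show "rOut (NN A) f1 = rOut (NN A) f2"
      proof
        fix v show "rOut (NN A) f1 v = rOut (NN A) f2 v"
          using fun_cong[OF eq, of v] by (auto simp: glue_def rOut_def split: if_splits)
      qed
      show "\<phi>1 = \<phi>2"
      proof
        fix v show "\<phi>1 v = \<phi>2 v"
          using fun_cong[OF eq, of v] h(2,4) by (auto simp: glue_def GoodN_def PiE_dflt_def split: if_splits)
      qed
    qed
  qed
  have "(\<lambda>(\<tau>, \<phi>). glue (NN A) \<tau> \<phi>) ` (?T \<times> GoodN A) \<subseteq> Om"
    using glue_Om[OF A] by auto
  then have "card ((\<lambda>(\<tau>, \<phi>). glue (NN A) \<tau> \<phi>) ` (?T \<times> GoodN A)) \<le> card Om"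
    by (rule card_mono[OF Om_fin])
  then show "card ?T * card (GoodN A) \<le> card Om"
    using card_image[OF inj] by (simp add: card_cartesian_product)
qed

lemma GoodN_card: "finite A \<Longrightarrow> card (GoodN A) = (\<Prod>v\<in>NN A. kk v)"
  unfolding GoodN_def kk_def
  by (rule card_PiE_dflt) (auto simp: NN_def vb_fin good_fin)

definition rho :: real where "rho = 2*M / (2*M+1)"

lemma rho_pos: "0 < rho" "rho < 1" using M1 by (auto simp: rho_def)

lemma EA_bound:
  assumes A: "A \<subseteq> G'" and finA: "finite A"
  shows "real (card (EA A)) \<le> real (nat (4*M)) ^ card A * rho ^ card (vboundary E A) * real (card Om)"
proof -
  let ?T = "rOut (NN A) ` EA A"
  let ?B = "vboundary E A"
  have finB: "finite ?B" using vb_fin finA by blast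
  have disj: "A \<inter> ?B = {}" by (auto simp: vboundary_def)
  have c1: "real (card (EA A)) \<le> real (card ?T) * real (card (XA A))"
    unfolding of_nat_mult[symmetric] of_nat_le_iff by (rule EA_card(1)[OF A finA])
  have c2: "real (card ?T) * real (card (GoodN A)) \<le> real (card Om)"
    unfolding of_nat_mult[symmetric] of_nat_le_iff by (rule EA_card(2)[OF A finA])
  let ?c = "real (nat (4*M)) ^ card A"
  have x1: "real (card (XA A)) \<le> real (nat (4*M) ^ card A * (\<Prod>u\<in>?B. (kk u - 1)))"
    using XA_card[OF finA] by (simp only: of_nat_le_iff)
  have x2: "real (nat (4*M) ^ card A * (\<Prod>u\<in>?B. (kk u - 1))) = ?c * (\<Prod>u\<in>?B. real (kk u - 1))"
    by (simp only: of_nat_mult of_nat_power of_nat_prod)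
  have p1: "(\<Prod>u\<in>?B. real (kk u - 1)) \<le> (\<Prod>u\<in>?B. rho * real (kk u))"
  proof (rule prod_mono, rule conjI)
    fix u
    have k: "1 \<le> kk u" "int (kk u) \<le> 2*M+1" using kk_bounds by auto
    then have "real_of_int (int (kk u)) \<le> real_of_int (2*M+1)" by (simp only: of_int_le_iff)
    then have "real (kk u) \<le> 2 * real_of_int M + 1" by simp
    then have "real (kk u) - 1 \<le> rho * real (kk u)" using M1 by (simp add: rho_def field_simps)
    then show "real (kk u - 1) \<le> rho * real (kk u)" using k(1) by (simp add: of_nat_diff)
  qed auto
  have p2: "(\<Prod>u\<in>?B. rho * real (kk u)) = rho ^ card ?B * (\<Prod>u\<in>?B. real (kk u))"
    by (simp add: prod.distrib)
  have p3: "(\<Prod>u\<in>?B. real (kk u)) \<le> real (card (GoodN A))"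
  proof -
    have e: "(\<Prod>v\<in>NN A. real (kk v)) = (\<Prod>v\<in>A. real (kk v)) * (\<Prod>u\<in>?B. real (kk u))"
      unfolding NN_def using prod.union_disjoint[OF finA finB disj] by simp
    have o1: "1 \<le> (\<Prod>v\<in>A. real (kk v))" using kk_bounds by (intro prod_ge_1) auto
    have o2: "0 \<le> (\<Prod>u\<in>?B. real (kk u))" by (intro prod_nonneg) auto
    have "(\<Prod>u\<in>?B. real (kk u)) \<le> (\<Prod>v\<in>A. real (kk v)) * (\<Prod>u\<in>?B. real (kk u))"
      using mult_right_mono[OF o1 o2] by simp
    also have "\<dots> = real (card (GoodN A))" using e GoodN_card[OF finA] by (simp add: of_nat_prod)
    finally show ?thesis .
  qed
  have rp: "0 \<le> rho ^ card ?B" using rho_pos by simp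
  have "(\<Prod>u\<in>?B. real (kk u - 1)) \<le> rho ^ card ?B * real (card (GoodN A))"
    using p1 p2 mult_left_mono[OF p3 rp] by linarith
  then have cX: "real (card (XA A)) \<le> ?c * (rho ^ card ?B * real (card (GoodN A)))"
  proof -
    have "0 \<le> ?c" by simp
    from mult_left_mono[OF \<open>(\<Prod>u\<in>?B. real (kk u - 1)) \<le> rho ^ card ?B * real (card (GoodN A))\<close> this]
    show ?thesis using x1 x2 by linarith
  qed
  have "real (card (EA A)) \<le> real (card ?T) * (?c * (rho ^ card ?B * real (card (GoodN A))))"
    using c1 mult_left_mono[OF cX, of "real (card ?T)"] by simp
  also have "\<dots> = ?c * rho ^ card ?B * (real (card ?T) * real (card (GoodN A)))"
    by (simp add: algebra_simps)
  also have "\<dots> \<le> ?c * rho ^ card ?B * real (card Om)"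
    using c2 rho_pos by (intro mult_left_mono) auto
  finally show ?thesis .
qed

end


datatype letter = Fw nat | Bk

fun isFw :: "letter \<Rightarrow> bool" where "isFw (Fw i) = True" | "isFw Bk = False"
fun idx :: "letter \<Rightarrow> nat" where "idx (Fw i) = i" | "idx Bk = 0"

fun stp :: "('v \<Rightarrow> nat \<Rightarrow> 'v) \<Rightarrow> 'v list \<times> 'v set \<Rightarrow> letter \<Rightarrow> 'v list \<times> 'v set" where
  "stp nb (st, V) (Fw i) = (nb (hd st) i # st, insert (nb (hd st) i) V)"
| "stp nb (st, V) Bk = (tl st, V)"

definition run :: "('v \<Rightarrow> nat \<Rightarrow> 'v) \<Rightarrow> 'v list \<times> 'v set \<Rightarrow> letter list \<Rightarrow> 'v list \<times> 'v set" where
  "run nb s w = foldl (stp nb) s w"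

definition vis :: "('v \<Rightarrow> nat \<Rightarrow> 'v) \<Rightarrow> 'v \<Rightarrow> letter list \<Rightarrow> 'v set" where
  "vis nb v0 w = snd (run nb ([v0], {v0}) w)"

lemma run_append: "run nb s (w1 @ w2) = run nb (run nb s w1) w2"
  by (simp add: run_def)

lemma run_Nil[simp]: "run nb s [] = s" by (simp add: run_def)
lemma run_Cons[simp]: "run nb s (l # w) = run nb (stp nb s l) w" by (simp add: run_def)

lemma run_split: "run nb (st, V) w = (fst (run nb (st, {}) w), V \<union> snd (run nb (st, {}) w))"
proof (induction w arbitrary: st V)
  case Nil then show ?case by simp
next
  case (Cons l w)
  show ?case
  proof (cases l)
    case (Fw i)
    define x where "x = nb (hd st) i"
    have "run nb (st, V) (l # w) = run nb (x # st, insert x V) w" using Fw by (simp add: x_def)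
    also have "\<dots> = (fst (run nb (x # st, {}) w), insert x V \<union> snd (run nb (x # st, {}) w))"
      by (rule Cons.IH)
    finally have 1: "run nb (st, V) (l # w) = (fst (run nb (x # st, {}) w), insert x V \<union> snd (run nb (x # st, {}) w))" .
    have "run nb (st, {}) (l # w) = run nb (x # st, {x}) w" using Fw by (simp add: x_def)
    also have "\<dots> = (fst (run nb (x # st, {}) w), {x} \<union> snd (run nb (x # st, {}) w))"
      by (rule Cons.IH)
    finally have 2: "run nb (st, {}) (l # w) = (fst (run nb (x # st, {}) w), {x} \<union> snd (run nb (x # st, {}) w))" .
    show ?thesis unfolding 1 2 by auto
  next
    case Bk
    have 1: "run nb (st, V) (l # w) = (fst (run nb (tl st, {}) w), V \<union> snd (run nb (tl st, {}) w))"
      using Bk Cons.IH[of "tl st" V] by simp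
    have 2: "run nb (st, {}) (l # w) = run nb (tl st, {}) w" using Bk by simp
    show ?thesis unfolding 1 2 by simp
  qed
qed

lemma vis_prefix:
  assumes "x \<in> vis nb v0 w"
  shows "\<exists>w1 w2. w = w1 @ w2 \<and> hd (fst (run nb ([v0], {v0}) w1)) = x"
  using assms
proof (induction w arbitrary: x rule: rev_induct)
  case Nil then show ?case by (simp add: vis_def)
next
  case (snoc l w)
  obtain st V where sv: "run nb ([v0], {v0}) w = (st, V)" by fastforce
  show ?case
  proof (cases l)
    case (Fw i)
    have r: "run nb ([v0], {v0}) (w @ [l]) = (nb (hd st) i # st, insert (nb (hd st) i) V)"
      using sv Fw by (simp add: run_append)
    show ?thesis
    proof (cases "x = nb (hd st) i")
      case True
      then show ?thesis using r by (intro exI[of _ "w @ [l]"] exI[of _ "[]"]) simp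
    next
      case False
      then have "x \<in> vis nb v0 w" using snoc.prems r sv by (simp add: vis_def)
      then obtain w1 w2 where "w = w1 @ w2" "hd (fst (run nb ([v0], {v0}) w1)) = x" using snoc.IH by blast
      then show ?thesis by (intro exI[of _ w1] exI[of _ "w2 @ [l]"]) simp
    qed
  next
    case Bk
    have r: "run nb ([v0], {v0}) (w @ [l]) = (tl st, V)" using sv Bk by (simp add: run_append)
    then have "x \<in> vis nb v0 w" using snoc.prems sv by (simp add: vis_def)
    then obtain w1 w2 where "w = w1 @ w2" "hd (fst (run nb ([v0], {v0}) w1)) = x" using snoc.IH by blast
    then show ?thesis by (intro exI[of _ w1] exI[of _ "w2 @ [l]"]) simp
  qed
qed

lemma vis_insert:
  assumes "hd (fst (run nb ([v0], {v0}) w1)) = p"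
  shows "vis nb v0 (w1 @ [Fw i, Bk] @ w2) = insert (nb p i) (vis nb v0 (w1 @ w2))"
proof -
  obtain st V where sv: "run nb ([v0], {v0}) w1 = (st, V)" by fastforce
  have hp: "hd st = p" using assms sv by simp
  have "run nb ([v0], {v0}) (w1 @ [Fw i, Bk] @ w2) = run nb (st, insert (nb p i) V) w2"
    using sv hp by (simp add: run_append)
  moreover have "run nb ([v0], {v0}) (w1 @ w2) = run nb (st, V) w2"
    using sv by (simp add: run_append)
  ultimately show ?thesis unfolding vis_def
    using run_split[of nb st "insert (nb p i) V" w2] run_split[of nb st V w2] by simp
qed

definition Wd :: "nat \<Rightarrow> nat \<Rightarrow> letter list set" where
  "Wd D m = {w. length w = 2*m \<and> length (filter isFw w) = m \<and> (\<forall>i. Fw i \<in> set w \<longrightarrow> i < D)}"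

lemma enc_inj: "map isFw w = map isFw w' \<Longrightarrow> map idx (filter isFw w) = map idx (filter isFw w') \<Longrightarrow> w = w'"
proof (induction w arbitrary: w')
  case Nil then show ?case by simp
next
  case (Cons l w)
  then obtain l' w'' where w': "w' = l' # w''" by (cases w') auto
  show ?case
  proof (cases l)
    case (Fw i)
    then obtain j where "l' = Fw j" using Cons.prems w' by (cases l') auto
    then show ?thesis using Cons Fw w' by auto
  next
    case Bk
    then have "l' = Bk" using Cons.prems w' by (cases l') auto
    then show ?thesis using Cons Bk w' by auto
  qed
qed

lemma Wd_card: "card (Wd D m) \<le> 4 ^ m * D ^ m"
proof -
  let ?f = "\<lambda>w. (map isFw w, map idx (filter isFw w))"
  let ?T = "{bs. set bs \<subseteq> (UNIV::bool set) \<and> length bs = 2*m} \<times> {is. set is \<subseteq> {..<D} \<and> length is = m}"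
  have inj: "inj_on ?f (Wd D m)" by (rule inj_onI) (auto intro: enc_inj)
  have sub: "?f ` Wd D m \<subseteq> ?T"
  proof
    fix y assume "y \<in> ?f ` Wd D m"
    then obtain w where w: "w \<in> Wd D m" "y = ?f w" by auto
    have "set (map idx (filter isFw w)) \<subseteq> {..<D}"
    proof
      fix i assume "i \<in> set (map idx (filter isFw w))"
      then obtain l where l: "l \<in> set w" "isFw l" "i = idx l" by auto
      obtain j where "l = Fw j" using l(2) by (cases l) auto
      then show "i \<in> {..<D}" using l w(1) by (auto simp: Wd_def)
    qed
    then show "y \<in> ?T" using w by (auto simp: Wd_def)
  qed
  have finT: "finite ?T" by (intro finite_cartesian_product finite_lists_length_eq) auto
  have "card (Wd D m) = card (?f ` Wd D m)" using card_image[OF inj] by simp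
  also have "\<dots> \<le> card ?T" using card_mono[OF finT sub] .
  also have "\<dots> = 2 ^ (2*m) * D ^ m"
    using card_lists_length_eq[of "UNIV::bool set" "2*m"] card_lists_length_eq[of "{..<D}" m]
    by (simp add: card_cartesian_product)
  also have "\<dots> = 4 ^ m * D ^ m" by (simp add: power_mult)
  finally show ?thesis .
qed

definition nbe :: "('v \<Rightarrow> 'v \<Rightarrow> bool) \<Rightarrow> 'v \<Rightarrow> nat \<Rightarrow> 'v" where
  "nbe R p = (SOME h. bij_betw h {..<card {x. R p x}} {x. R p x})"

lemma nbe_surj:
  assumes "finite {x. R p x}" "R p x"
  shows "\<exists>i < card {x. R p x}. nbe R p i = x"
proof -
  obtain h where "bij_betw h {0..<card {x. R p x}} {x. R p x}" using ex_bij_betw_nat_finite[OF assms(1)] by blast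
  then have "bij_betw h {..<card {x. R p x}} {x. R p x}" by (simp add: atLeast0LessThan)
  then have b: "bij_betw (nbe R p) {..<card {x. R p x}} {x. R p x}" unfolding nbe_def by (rule someI[where P="\<lambda>h. bij_betw h {..<card {x. R p x}} {x. R p x}"])
  then have "x \<in> nbe R p ` {..<card {x. R p x}}" using assms(2) by (simp add: bij_betw_def)
  then show ?thesis by auto
qed

lemma cover:
  fixes R :: "'v \<Rightarrow> 'v \<Rightarrow> bool"
  assumes finA: "finite A" and v0: "v0 \<in> A"
    and reach: "\<And>S. v0 \<in> S \<Longrightarrow> S \<subset> A \<Longrightarrow> \<exists>p\<in>S. \<exists>x\<in>A - S. R p x"
    and finR: "\<And>p. finite {x. R p x} \<and> card {x. R p x} \<le> D"
  shows "\<exists>w\<in>Wd D (card A - 1). vis (nbe R) v0 w = A"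
proof -
  have main: "k + 1 \<le> card A \<Longrightarrow> \<exists>w\<in>Wd D k. vis (nbe R) v0 w \<subseteq> A \<and> card (vis (nbe R) v0 w) = k + 1 \<and> v0 \<in> vis (nbe R) v0 w" for k
  proof (induction k)
    case 0
    have "[] \<in> Wd D 0" by (simp add: Wd_def)
    then show ?case using v0 by (intro bexI[of _ "[]"]) (auto simp: vis_def)
  next
    case (Suc k)
    have "k + 1 \<le> card A" using Suc.prems by simp
    then obtain w where w: "w \<in> Wd D k" "vis (nbe R) v0 w \<subseteq> A" "card (vis (nbe R) v0 w) = k + 1" "v0 \<in> vis (nbe R) v0 w"
      using Suc.IH by blast
    let ?S = "vis (nbe R) v0 w"
    have "?S \<subset> A" using w(2,3) Suc.prems by auto
    then obtain p x where px: "p \<in> ?S" "x \<in> A - ?S" "R p x" using reach w(4) by blast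
    obtain i where i: "i < card {x. R p x}" "nbe R p i = x" using nbe_surj[of R p x] finR[of p] px(3) by blast
    obtain w1 w2 where ww: "w = w1 @ w2" "hd (fst (run (nbe R) ([v0], {v0}) w1)) = p"
      using vis_prefix[OF px(1)] by blast
    let ?w' = "w1 @ [Fw i, Bk] @ w2"
    have v': "vis (nbe R) v0 ?w' = insert x ?S" using vis_insert[OF ww(2)] i(2) ww(1) by simp
    have "i < D" using i(1) finR[of p] by linarith
    then have "?w' \<in> Wd D (Suc k)" using w(1) ww(1) by (auto simp: Wd_def)
    moreover have "card (insert x ?S) = Suc k + 1"
    proof -
      have finS: "finite ?S" using finA w(2) by (rule finite_subset[rotated])
      have "x \<notin> ?S" using px(2) by blast
      then show ?thesis using w(3) finS by simp
    qed
    ultimately show ?case using v' w(2,4) px(2) by (intro bexI[of _ ?w']) auto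
  qed
  obtain w where w: "w \<in> Wd D (card A - 1)" "vis (nbe R) v0 w \<subseteq> A" "card (vis (nbe R) v0 w) = card A"
  proof -
    have "card A \<noteq> 0" using v0 finA by auto
    then have e: "card A - 1 + 1 = card A" by simp
    show ?thesis using main[of "card A - 1"] that unfolding e by blast
  qed
  then have "vis (nbe R) v0 w = A" using finA by (simp add: card_subset_eq)
  then show ?thesis using w(1) by blast
qed


lemma bern2: "0 \<le> (x::real) \<Longrightarrow> 1 + real n * x + real n * (real n - 1) / 2 * x^2 \<le> (1 + x) ^ n"
proof (induction n)
  case 0 then show ?case by simp
next
  case (Suc n)
  have nn: "real n * (real n - 1) \<ge> 0" by (cases n) auto
  have eq: "(1 + real n * x + real n * (real n - 1) / 2 * x^2) * (1 + x)
     - (1 + real (Suc n) * x + real (Suc n) * (real (Suc n) - 1) / 2 * x^2) = real n * (real n - 1) / 2 * x^3"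
    by (simp add: field_simps power2_eq_square power3_eq_cube)
  have "real n * (real n - 1) / 2 * x^3 \<ge> 0" using nn Suc.prems by simp
  then have "1 + real (Suc n) * x + real (Suc n) * (real (Suc n) - 1) / 2 * x^2
      \<le> (1 + real n * x + real n * (real n - 1) / 2 * x^2) * (1 + x)"
    using eq by linarith
  also have "\<dots> \<le> (1 + x) ^ n * (1 + x)" using Suc by (intro mult_right_mono) auto
  finally show ?case by (simp add: mult.commute)
qed

lemma exp_nat_bound: "exp (real k) < (272/100) ^ k" if "k > 0"
proof -
  have "exp (real k) = exp 1 ^ k" using exp_of_nat_mult[of k 1] by simp
  also have "\<dots> < (272/100) ^ k" using e_less_272 that by (intro power_strict_mono) auto
  finally show ?thesis .
qed

lemma boot: "exp t \<ge> c \<Longrightarrow> exp (real k) < c \<Longrightarrow> t > real k"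
  by (metis exp_le_cancel_iff le_less_trans linorder_not_less order.strict_iff_not)

lemma key_ineq:
  fixes M :: int and d :: nat and h :: real
  assumes M1: "M \<ge> 1" and d1: "d \<ge> 1" and hl: "h \<ge> 4*M*ln(real d^4*(4*M+1))" and hd: "h \<le> d"
  shows "16 * M * real d^2 * ((2*M)/(2*M+1)) powr h * exp (h/(4*M)) \<le> 1"
proof -
  define m where "m = real_of_int M"
  have m1: "m \<ge> 1" using M1 by (simp add: m_def)
  define X where "X = real d^4*(4*m+1)"
  have dr: "real d \<ge> 1" using d1 by simp
  have d4: "real d ^ 4 \<ge> 1" using dr by simp
  have X5: "X \<ge> 5"
  proof -
    have "1 * 5 \<le> real d^4*(4*m+1)" using d4 m1 by (intro mult_mono) auto
    then show ?thesis by (simp add: X_def)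
  qed
  define s where "s = h / (4*m)"
  have sX: "s \<ge> ln X" using hl m1 by (simp add: s_def X_def m_def field_simps)
  have es: "exp s \<ge> X" using sX X5 by (metis exp_ln exp_le_cancel_iff less_le_trans zero_less_numeral)
  have s0: "s \<ge> 0" using sX X5 by (meson ln_ge_zero dual_order.trans one_le_numeral order.trans)
  define t where "t = real d / (4*m)"
  have ts: "t \<ge> s" using hd m1 by (simp add: s_def t_def divide_right_mono)
  have et: "exp t \<ge> X" using es ts by (meson exp_le_cancel_iff order_trans)
  have dt: "real d = 4*m*t" using m1 by (simp add: t_def)
  have t0: "t > 0" using dr m1 by (simp add: t_def)
  have X1280: "X \<ge> 1280 * t^4"
  proof -
    have "real d ^ 4 = 256 * m^4 * t^4" unfolding dt by (simp add: power_mult_distrib)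
    moreover have "m^4 \<ge> 1" using m1 by simp
    moreover have "256 * 1 * t^4 \<le> 256 * m^4 * t^4" using \<open>m^4 \<ge> 1\<close> t0 by (intro mult_right_mono) auto
    ultimately have r: "real d ^ 4 \<ge> 256 * t^4" by simp
    moreover have "4*m+1 \<ge> 5" using m1 by simp
    ultimately have "(256 * t^4) * 5 \<le> real d ^ 4 * (4*m+1)" using t0 by (intro mult_mono) auto
    then show ?thesis unfolding X_def by simp
  qed
  have bt: "t > real k" if "c \<le> X" "(272/100) ^ k \<le> c" "k > 0" for c k
  proof (rule boot)
    show "c \<le> exp t" using that(1) et by linarith
    show "exp (real k) < c" using exp_nat_bound[OF that(3)] that(2) by linarith
  qed
  have "t > real (1::nat)" by (rule bt[of 5]) (use X5 in \<open>auto simp: power_divide\<close>)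
  then have "1280 * 1 \<le> 1280 * t^4" by simp
  then have "t > real (7::nat)" by (intro bt[of 1280]) (use X1280 in \<open>auto simp: power_divide\<close>)
  then have "1280 * 7^4 \<le> 1280 * t^4" by (intro mult_left_mono power_mono) auto
  then have "t > real (14::nat)" by (intro bt[of "1280 * 7^4"]) (use X1280 in \<open>auto simp: power_divide\<close>)
  then have "1280 * 14^4 \<le> 1280 * t^4" by (intro mult_left_mono power_mono) auto
  then have "t > real (17::nat)" by (intro bt[of "1280 * 14^4"]) (use X1280 in \<open>auto simp: power_divide\<close>)
  then have "1280 * 17^4 \<le> 1280 * t^4" by (intro mult_left_mono power_mono) auto
  then have "t > real (18::nat)" by (intro bt[of "1280 * 17^4"]) (use X1280 in \<open>auto simp: power_divide\<close>)
  then have t18: "t > 18" by simp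
  then have "4*m*18 \<le> 4*m*t" using m1 by (intro mult_left_mono) auto
  then have d72: "real d \<ge> 72 * m" using dt by simp
  
  define k where "k = nat (2*M)"
  have km: "real k = 2*m" using M1 by (simp add: k_def m_def)
  have k2: "real k \<ge> 2" using km m1 by simp
  define rho where "rho = (2*m)/(2*m+1)"
  have rho0: "rho > 0" using m1 by (simp add: rho_def)
  have rhok: "rho = 1 / (1 + 1/real k)" using km m1 by (simp add: rho_def field_simps)
  have bk: "(1 + 1/real k) ^ k \<ge> 9/4"
  proof -
    have "1 + real k * (1/real k) + real k * (real k - 1) / 2 * (1/real k)^2 \<le> (1 + 1/real k) ^ k"
      by (rule bern2) simp
    moreover have "1 + real k * (1/real k) + real k * (real k - 1) / 2 * (1/real k)^2 = 2 + (real k - 1)/(2 * real k)"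
      using k2 by (simp add: field_simps power2_eq_square)
    moreover have "(real k - 1)/(2 * real k) \<ge> 1/4" using k2 by (simp add: field_simps)
    ultimately show ?thesis by linarith
  qed
  have rk: "rho ^ k \<le> 4/9"
  proof -
    have "rho ^ k = 1 / (1 + 1/real k) ^ k" by (simp add: rhok power_one_over)
    also have "\<dots> \<le> 1 / (9/4)" using bk by (intro divide_left_mono) auto
    finally show ?thesis by simp
  qed
  have r2k: "rho ^ (2*k) \<le> 16/81"
  proof -
    have "rho ^ (2*k) = (rho ^ k)^2" by (simp add: power_mult mult.commute)
    also have "\<dots> \<le> (4/9)^2" using rk rho0 by (intro power_mono) auto
    also have "(4/9::real)^2 = 16/81" by (simp add: power2_eq_square)
    finally show ?thesis .
  qed
  have e81: "exp (81/50::real) \<le> 81/16"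
  proof -
    have "exp (81/50) ^ 50 = exp (real (81::nat))" by (simp flip: exp_of_nat_mult)
    also have "\<dots> < (272/100) ^ 81" by (rule exp_nat_bound) simp
    also have "\<dots> \<le> (81/16) ^ 50" by (simp add: power_divide)
    finally have "exp (81/50::real) ^ 50 < (81/16) ^ 50" .
    then have "exp (81/50::real) < 81/16" by (rule power_less_imp_less_base) simp
    then show ?thesis by simp
  qed
  have lnr: "4*m*ln rho \<le> -81/50"
  proof -
    have "4*m*ln rho = ln (rho ^ (2*k))" using rho0 km by (simp add: ln_realpow)
    also have "\<dots> \<le> ln (16/81)" using r2k rho0 by simp
    also have "\<dots> \<le> -81/50"
    proof -
      have "exp (-81/50::real) = 1 / exp (81/50)" by (simp add: exp_minus inverse_eq_divide)
      moreover have "1/(81/16) \<le> 1/exp(81/50::real)" using e81 by (intro divide_left_mono) auto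
      ultimately have "16/81 \<le> exp (-81/50::real)" by simp
      then have "ln (16/81) \<le> ln (exp (-81/50::real))" by (subst ln_le_cancel_iff) auto
      then show ?thesis by simp
    qed
    finally show ?thesis .
  qed
  have prod: "rho powr h * exp (h/(4*m)) = exp (s * (4*m*ln rho + 1))"
    using rho0 m1 by (simp add: powr_def s_def exp_add[symmetric] field_simps)
  have "s * (4*m*ln rho + 1) \<le> s * (-31/50)" using lnr s0 by (intro mult_left_mono) auto
  then have p2: "rho powr h * exp (h/(4*m)) \<le> exp (- (31/50) * s)" unfolding prod by simp
  
  define P where "P = 16 * m * real d^2"
  have P0: "P > 0" using m1 dr by (simp add: P_def)
  have "P ^ 50 \<le> X ^ 31"
  proof -
    have "P ^ 50 = 2^200 * m^50 * real d ^ 100" by (simp add: P_def power_mult_distrib flip: power_mult)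
    also have "\<dots> \<le> real d ^ 24 * (4*m+1)^31 * real d ^ 100"
    proof -
      have "2^200 * m^50 \<le> (72*m)^24 * (4*m)^31"
      proof -
        have "(72*m)^24 * (4*m)^31 = (72^24 * 4^31) * m^55" by (simp add: power_mult_distrib power_add[symmetric])
        moreover have "m^50 \<le> m^55" using m1 by (intro power_increasing) auto
        moreover have "(2::real)^200 \<le> 72^24 * 4^31" by simp
        ultimately show ?thesis using m1 by (smt (verit) mult_mono zero_le_power)
      qed
      also have "\<dots> \<le> real d ^ 24 * (4*m+1)^31" using d72 m1 by (intro mult_mono power_mono) auto
      finally show ?thesis by (intro mult_right_mono) auto
    qed
    also have "\<dots> = X ^ 31" by (simp add: X_def power_mult_distrib flip: power_mult)
    finally show ?thesis .
  qed
  also have "X ^ 31 \<le> exp s ^ 31" using es X5 by (intro power_mono) auto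
  also have "\<dots> = exp ((31/50) * s) ^ 50" by (simp flip: exp_of_nat_mult)
  finally have "P ^ 50 \<le> exp ((31/50) * s) ^ 50" .
  then have "P \<le> exp ((31/50) * s)" using power_mono_iff[of P "exp ((31/50) * s)" 50] P0 by simp
  then have "P * exp (- (31/50) * s) \<le> 1" by (simp add: exp_minus field_simps)
  moreover have "16 * M * real d^2 * ((2*M)/(2*M+1)) powr h * exp (h/(4*M)) = P * (rho powr h * exp (h/(4*m)))"
    by (simp add: P_def rho_def m_def)
  ultimately show ?thesis using p2 P0 by (smt (verit) mult_left_mono)
qed


context setting begin

lemma cheeger_le:
  assumes "finite S" "S \<noteq> {}"
  shows "cheeger E \<le> real (card (vboundary E S)) / real (card S)"
  unfolding cheeger_def
proof (rule cInf_lower)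
  show "real (card (vboundary E S)) / real (card S) \<in> {real (card (vboundary E S)) / real (card S) |S. finite S \<and> S \<noteq> {}}"
    using assms by blast
  show "bdd_below {real (card (vboundary E S)) / real (card S) |S. finite S \<and> S \<noteq> {}}"
    by (rule bdd_belowI[of _ 0]) auto
qed

lemma cheeger_le_d: "cheeger E \<le> real d"
proof -
  obtain v :: 'v where True by blast
  have "vboundary E {v} \<subseteq> {u. E v u}" using symE by (auto simp: vboundary_def)
  then have "card (vboundary E {v}) \<le> d" using nbrs_fin nbrs_card card_mono le_trans by metis
  then show ?thesis using cheeger_le[of "{v}"] by simp
qed

lemma d_ge1: "d \<ge> 1"
proof -
  obtain v :: 'v where True by blast
  obtain u :: 'v where "u \<noteq> v" using inf ex_new_if_finite[of "{v}"] by auto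
  have "E\<^sup>*\<^sup>* v u" using conn' by blast
  then obtain w where "E v w" using \<open>u \<noteq> v\<close> by (metis converse_rtranclpE)
  then have "{w. E v w} \<noteq> {}" by auto
  then have "card {w. E v w} \<ge> 1" using nbrs_fin by (simp add: Suc_leI card_gt_0_iff)
  then show ?thesis using nbrs_card[of v] by simp
qed

definition R2 :: "'v \<Rightarrow> 'v \<Rightarrow> bool" where "R2 p x \<longleftrightarrow> x \<noteq> p \<and> dist_le2 E p x"

lemma R2_card: "finite {x. R2 p x} \<and> card {x. R2 p x} \<le> d^2"
proof -
  let ?N = "{u. E p u}"
  have sub: "{x. R2 p x} \<subseteq> ?N \<union> (\<Union>w\<in>?N. {u. E w u} - {p})"
    by (auto simp: R2_def dist_le2_def)
  have fin: "finite (?N \<union> (\<Union>w\<in>?N. {u. E w u} - {p}))" using nbrs_fin by auto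
  have "card (?N \<union> (\<Union>w\<in>?N. {u. E w u} - {p})) \<le> card ?N + card (\<Union>w\<in>?N. {u. E w u} - {p})"
    by (rule card_Un_le)
  also have "card (\<Union>w\<in>?N. {u. E w u} - {p}) \<le> (\<Sum>w\<in>?N. card ({u. E w u} - {p}))"
    by (rule card_UN_le) (rule nbrs_fin)
  also have "\<dots> \<le> (\<Sum>w\<in>?N. (d - 1))"
  proof (rule sum_mono)
    fix w assume "w \<in> ?N"
    then have "p \<in> {u. E w u}" using symE by auto
    then have "card ({u. E w u} - {p}) = card {u. E w u} - 1" using nbrs_fin by simp
    then show "card ({u. E w u} - {p}) \<le> d - 1" using nbrs_card[of w] by simp
  qed
  also have "\<dots> = card ?N * (d - 1)" by simp
  finally have "card (?N \<union> (\<Union>w\<in>?N. {u. E w u} - {p})) \<le> card ?N + card ?N * (d - 1)" by simp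
  also have "\<dots> \<le> d + d * (d - 1)" using nbrs_card[of p] by (intro add_mono mult_right_mono) auto
  also have "\<dots> = d^2" using d_ge1 by (simp add: power2_eq_square algebra_simps)
  finally have "card (?N \<union> (\<Union>w\<in>?N. {u. E w u} - {p})) \<le> d^2" .
  then show ?thesis using sub fin card_mono finite_subset le_trans by metis
qed

definition RB :: "('v \<Rightarrow> int) \<Rightarrow> 'v \<Rightarrow> 'v \<Rightarrow> bool" where
  "RB f x y \<longleftrightarrow> x \<in> Bset E isev G' M a b f \<and> y \<in> Bset E isev G' M a b f \<and> dist_le2 E x y"

lemma Acomp_eq: "Acomp E isev G' M a b f v0 = {u. v0 \<in> Bset E isev G' M a b f \<and> (RB f)\<^sup>*\<^sup>* v0 u}"
  unfolding Acomp_def RB_def Let_def by simp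

lemma RB_in_B: "(RB f)\<^sup>*\<^sup>* v0 u \<Longrightarrow> v0 \<in> Bset E isev G' M a b f \<Longrightarrow> u \<in> Bset E isev G' M a b f"
  by (induction rule: rtranclp_induct) (auto simp: RB_def)

lemma RB_cross:
  assumes "(RB f)\<^sup>*\<^sup>* v0 y" "v0 \<in> S" "y \<notin> S"
  shows "\<exists>z y'. z \<in> S \<and> y' \<notin> S \<and> RB f z y' \<and> (RB f)\<^sup>*\<^sup>* v0 z"
  using assms
proof (induction rule: rtranclp_induct)
  case base then show ?case by simp
next
  case (step y1 y)
  show ?case
  proof (cases "y1 \<in> S")
    case True then show ?thesis using step by blast
  next
    case False then show ?thesis using step by blast
  qed
qed

lemma Acomp_props:
  assumes f: "f \<in> Om" and n1: "card (Acomp E isev G' M a b f v0) = n" "n \<ge> 1"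
  defines "A \<equiv> Acomp E isev G' M a b f v0"
  shows "A \<subseteq> G'" "finite A" "v0 \<in> A" "card A = n" "f \<in> EA A"
    "\<And>S. v0 \<in> S \<Longrightarrow> S \<subset> A \<Longrightarrow> \<exists>p\<in>S. \<exists>x\<in>A - S. R2 p x"
proof -
  let ?B = "Bset E isev G' M a b f"
  have v0B: "v0 \<in> ?B"
  proof (rule ccontr)
    assume "v0 \<notin> ?B"
    then have "A = {}" by (simp add: A_def Acomp_eq)
    then show False using n1 by (simp add: A_def)
  qed
  have AB: "A \<subseteq> ?B" using RB_in_B v0B by (auto simp: A_def Acomp_eq)
  show AG: "A \<subseteq> G'" using AB Bset_sub[OF f] by blast
  show finA: "finite A" using AG finG finite_subset by blast
  show "v0 \<in> A" using v0B by (simp add: A_def Acomp_eq)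
  show "card A = n" using n1 by (simp add: A_def)
  show "f \<in> EA A" unfolding EA_def
  proof (intro CollectI conjI ballI impI)
    show "f \<in> Om" by (rule f)
  next
    fix v assume "v \<in> A" then show "\<not> good v (f v)" using AB by (auto simp: Bset_eq)
  next
    fix u assume u: "u \<in> W" "u \<notin> A" "\<exists>v\<in>A. dist_le2 E v u"
    show "good u (f u)"
    proof (rule ccontr)
      assume "\<not> good u (f u)"
      then have uB: "u \<in> ?B" using u(1) by (simp add: Bset_eq)
      obtain v where v: "v \<in> A" "dist_le2 E v u" using u(3) by blast
      have "(RB f)\<^sup>*\<^sup>* v0 v" using v(1) by (simp add: A_def Acomp_eq)
      moreover have "RB f v u" using v AB uB by (auto simp: RB_def)
      ultimately have "(RB f)\<^sup>*\<^sup>* v0 u" by simp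
      then have "u \<in> A" using v0B by (simp add: A_def Acomp_eq)
      then show False using u(2) by simp
    qed
  qed
  fix S assume S: "v0 \<in> S" "S \<subset> A"
  then obtain y where y: "y \<in> A" "y \<notin> S" by blast
  then have "(RB f)\<^sup>*\<^sup>* v0 y" by (simp add: A_def Acomp_eq)
  then obtain z y' where zy: "z \<in> S" "y' \<notin> S" "RB f z y'" "(RB f)\<^sup>*\<^sup>* v0 z"
    using RB_cross S(1) y(2) by blast
  have "(RB f)\<^sup>*\<^sup>* v0 y'" using zy(3,4) by simp
  then have "y' \<in> A" using v0B by (simp add: A_def Acomp_eq)
  moreover have "R2 z y'" using zy by (auto simp: R2_def RB_def)
  ultimately show "\<exists>p\<in>S. \<exists>x\<in>A - S. R2 p x" using zy(1,2) by blast
qed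

end


lemma Wd_fin: "finite (Wd D m)"
proof -
  have "Wd D m \<subseteq> {w. set w \<subseteq> insert Bk (Fw ` {..<D}) \<and> length w = 2*m}"
  proof (rule subsetI, rule CollectI, rule conjI)
    fix w assume w: "w \<in> Wd D m"
    show "set w \<subseteq> insert Bk (Fw ` {..<D})"
    proof
      fix l assume l: "l \<in> set w"
      show "l \<in> insert Bk (Fw ` {..<D})"
      proof (cases l)
        case (Fw i)
        then have "i < D" using w l by (auto simp: Wd_def)
        then show ?thesis using Fw by auto
      qed simp
    qed
    show "length w = 2*m" using w by (simp add: Wd_def)
  qed
  moreover have "finite {w. set w \<subseteq> insert Bk (Fw ` {..<D}) \<and> length w = 2*m}"
    by (rule finite_lists_length_eq) auto
  ultimately show ?thesis by (rule finite_subset)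
qed

context setting begin

lemma main_bound:
  assumes v0: "v0 \<in> G'" and n1: "n \<ge> 1" and hl: "cheeger E \<ge> 4*M*ln(real d^4*(4*M+1))"
  shows "measure_pmf.prob (nu E isev G' M a b) {f. card (Acomp E isev G' M a b f v0) = n}
           \<le> exp (- (cheeger E * n / (4 * M)))"
proof -
  define h where "h = cheeger E"
  define m where "m = real_of_int M"
  have m1: "m \<ge> 1" using M1 by (simp add: m_def)
  let ?Wd = "Wd (d^2) (n-1)"
  define Cands where "Cands = {A \<in> vis (nbe R2) v0 ` ?Wd. A \<subseteq> G' \<and> finite A \<and> card A = n}"
  define Omn where "Omn = Om \<inter> {f. card (Acomp E isev G' M a b f v0) = n}"
  have finC: "finite Cands"
  proof -
    have "Cands \<subseteq> Pow G'" by (auto simp: Cands_def)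
    then show ?thesis using finG by (meson finite_Pow_iff finite_subset)
  qed
  have cover_Omn: "Omn \<subseteq> (\<Union>A\<in>Cands. EA A)"
  proof
    fix f assume "f \<in> Omn"
    then have f: "f \<in> Om" "card (Acomp E isev G' M a b f v0) = n" by (auto simp: Omn_def)
    let ?A = "Acomp E isev G' M a b f v0"
    note P = Acomp_props[OF f n1]
    obtain w where w: "w \<in> Wd (d^2) (card ?A - 1)" "vis (nbe R2) v0 w = ?A"
      using cover[of ?A v0 R2 "d^2"] P(2,3,6) R2_card by blast
    have "?A \<in> Cands" using w P(1,2,4) unfolding Cands_def by (auto intro!: image_eqI[of _ _ w])
    then show "f \<in> (\<Union>A\<in>Cands. EA A)" using P(5) by blast
  qed
  have each: "real (card (EA A)) \<le> real (nat (4*M)) ^ n * rho powr (h * n) * real (card Om)" if "A \<in> Cands" for A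
  proof -
    have A: "A \<subseteq> G'" "finite A" "card A = n" using that by (auto simp: Cands_def)
    have Ane: "A \<noteq> {}" using A(3) n1 by auto
    have "h \<le> real (card (vboundary E A)) / real (card A)" unfolding h_def by (rule cheeger_le[OF A(2) Ane])
    then have hn: "h * n \<le> real (card (vboundary E A))" using A(3) n1 by (simp add: field_simps)
    have "rho ^ card (vboundary E A) = rho powr real (card (vboundary E A))"
      using rho_pos by (simp add: powr_realpow)
    also have "\<dots> \<le> rho powr (h * n)" using hn rho_pos by (intro powr_mono') auto
    finally have r: "rho ^ card (vboundary E A) \<le> rho powr (h * n)" .
    have "real (card (EA A)) \<le> real (nat (4*M)) ^ card A * rho ^ card (vboundary E A) * real (card Om)"
      by (rule EA_bound[OF A(1,2)])
    also have "\<dots> = real (nat (4*M)) ^ n * rho ^ card (vboundary E A) * real (card Om)"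
      using A(3) by simp
    also have "\<dots> \<le> real (nat (4*M)) ^ n * rho powr (h * n) * real (card Om)"
      using r by (intro mult_right_mono mult_left_mono) auto
    finally show ?thesis .
  qed
  have cC: "card Cands \<le> 4^(n-1) * (d^2)^(n-1)"
  proof -
    have "Cands \<subseteq> vis (nbe R2) v0 ` ?Wd" by (auto simp: Cands_def)
    then have "card Cands \<le> card (vis (nbe R2) v0 ` ?Wd)" using Wd_fin by (intro card_mono) auto
    also have "\<dots> \<le> card ?Wd" using Wd_fin by (rule card_image_le)
    also have "\<dots> \<le> 4^(n-1) * (d^2)^(n-1)" by (rule Wd_card)
    finally show ?thesis .
  qed
  let ?K = "real (nat (4*M)) ^ n * rho powr (h * n) * real (card Om)"
  have "real (card Omn) \<le> real (card (\<Union>A\<in>Cands. EA A))"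
  proof -
    have "finite (\<Union>A\<in>Cands. EA A)" using finC Om_fin by (auto simp: EA_def)
    then show ?thesis using cover_Omn by (simp add: card_mono)
  qed
  also have "\<dots> \<le> real (\<Sum>A\<in>Cands. card (EA A))" by (simp only: of_nat_le_iff card_UN_le[OF finC])
  also have "\<dots> = (\<Sum>A\<in>Cands. real (card (EA A)))" by simp
  also have "\<dots> \<le> (\<Sum>A\<in>Cands. ?K)" using each by (rule sum_mono)
  also have "\<dots> = real (card Cands) * ?K" by simp
  also have "\<dots> \<le> real (4^(n-1) * (d^2)^(n-1)) * ?K"
  proof (rule mult_right_mono)
    show "real (card Cands) \<le> real (4^(n-1) * (d^2)^(n-1))" using cC by (simp only: of_nat_le_iff)
    show "0 \<le> ?K" using rho_pos by simp
  qed
  finally have cOmn: "real (card Omn) \<le> real (4^(n-1) * (d^2)^(n-1)) * ?K" .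
  have Om0: "real (card Om) > 0" using Om_fin Om_ne by (simp add: card_gt_0_iff)
  have prob: "measure_pmf.prob (nu E isev G' M a b) {f. card (Acomp E isev G' M a b f v0) = n}
      = real (card Omn) / real (card Om)"
    unfolding nu_def Om_def[symmetric] Omn_def using Om_fin Om_ne by (simp add: measure_pmf_of_set)
  have "real (card Omn) / real (card Om) \<le> real (4^(n-1) * (d^2)^(n-1)) * real (nat (4*M)) ^ n * rho powr (h * n)"
    using cOmn Om0 by (simp add: field_simps)
  also have "\<dots> \<le> (4 * real d^2) ^ n * (4*m) ^ n * rho powr (h * n)"
  proof -
    have "real (4^(n-1) * (d^2)^(n-1)) = (4 * real d^2) ^ (n-1)" by (simp add: power_mult_distrib)
    also have "\<dots> \<le> (4 * real d^2) ^ n"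
    proof (rule power_increasing)
      have "real d \<ge> 1" using d_ge1 by simp
      then have "real d^2 \<ge> 1" by simp
      then show "1 \<le> 4 * real d^2" by simp
    qed (use n1 in auto)
    finally have 1: "real (4^(n-1) * (d^2)^(n-1)) \<le> (4 * real d^2) ^ n" .
    have 2: "real (nat (4*M)) = 4*m" using M1 by (simp add: m_def)
    show ?thesis unfolding 2 using 1 rho_pos m1 by (intro mult_right_mono) auto
  qed
  also have "\<dots> = (16 * m * real d^2 * rho powr h) ^ n"
  proof -
    have "(4::real) ^ n * 4 ^ n = 16 ^ n" by (simp flip: power_mult_distrib)
    then show ?thesis using rho_pos by (simp add: power_mult_distrib powr_power mult.commute mult.left_commute)
  qed
  also have "\<dots> \<le> exp (- (h / (4*m))) ^ n"
  proof (rule power_mono)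
    have k: "16 * m * real d^2 * rho powr h * exp (h/(4*m)) \<le> 1"
      using key_ineq[OF M1 d_ge1 hl[folded h_def] cheeger_le_d[folded h_def]]
      by (simp add: rho_def m_def)
    have "16 * m * real d^2 * rho powr h = 16 * m * real d^2 * rho powr h * exp (h/(4*m)) * exp (- (h/(4*m)))"
      by (simp add: exp_minus field_simps)
    also have "\<dots> \<le> 1 * exp (- (h/(4*m)))" using k by (intro mult_right_mono) auto
    finally show "16 * m * real d^2 * rho powr h \<le> exp (- (h / (4*m)))" by simp
    show "0 \<le> 16 * m * real d^2 * rho powr h" using m1 by simp
  qed
  also have "\<dots> = exp (- (h * n / (4*m)))" by (simp flip: exp_of_nat_mult)
  finally show ?thesis using prob by (simp add: h_def m_def)
qed

end

theorem proposition3p1: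
  fixes E :: "'v \<Rightarrow> 'v \<Rightarrow> bool" and isev :: "'v \<Rightarrow> bool"
    and d :: nat and h :: real and M a b :: int and G' :: "'v set"
  assumes "infinite (UNIV :: 'v set)"
    and "simple_graph E" and "connected_graph E" and "bipartition E isev"
    and "max_degree E d" and "h = cheeger E"
    and "M \<ge> 1" and "0 \<le> b - a" and "b - a \<le> 2 * M"
    and "finite G'"
    and "h \<ge> 4 * M * ln (real d ^ 4 * (4 * M + 1))"
  shows "\<forall>v0\<in>G'. \<forall>n::nat. n \<ge> 1 \<longrightarrow>
           measure_pmf.prob (nu E isev G' M a b) {f. card (Acomp E isev G' M a b f v0) = n}
             \<le> exp (- (h * n / (4 * M)))"
proof (intro ballI allI impI)
  fix v0 n assume v0: "v0 \<in> G'" and n: "(n::nat) \<ge> 1"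
  interpret setting E isev G' M a b d
    using assms(1-5,7-10) by (unfold_locales) auto
  have hl: "cheeger E \<ge> 4 * M * ln (real d ^ 4 * (4 * M + 1))" using assms(6,11) by simp
  show "measure_pmf.prob (nu E isev G' M a b) {f. card (Acomp E isev G' M a b f v0) = n}
             \<le> exp (- (h * n / (4 * M)))"
    using main_bound[OF v0 n hl] assms(6) by simp
qed

end
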